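(* Let $G$ be a finite group and $(c,\kappa_R,\kappa_L,b,a)\in\widetilde{\mathcal{PD}}(G)$. Set $\tilde c(g,h,k):=(-1)^{b(g)\cdot\kappa_R^{a(g)}(h,k)}c(g,h,k)$. Then $(\tilde c,\kappa_R,\kappa_R,0,a)\in\widetilde{\mathcal{PD}}(G)$ and $(c,\kappa_R,\kappa_L,b,a)\sim(\tilde c,\kappa_R,\kappa_R,0,a)$.
   Context: $\mathbb Z_2=\{0,1\}$ (additive group), $\mathrm U(1)$ multiplicative. For $A\in\{\mathbb Z_2,\mathrm U(1)\}$, $A\oplus A$ has componentwise group operation and the $\mathbb Z_2$-action $x^{a}=\begin{pmatrix}0&1\\1&0\end{pmatrix}^ax$ (swap components when $a=1$). $C^n(G,A\oplus A)$ denotes all maps $G^n\to A\oplus A$; $H^1(G,\mathbb Z_2)$ denotes group homomorphisms $G\to\mathbb Z_2$. For $a\in H^1(G,\mathbb Z_2)$: on $\mathbb Z_2\oplus\mathbb Z_2$-valued cochains, $d^1_ax(g,h)=x^{a(g)}(h)+x(g)-x(gh)$, $d^2_ay(g,h,k)=y^{a(g)}(h,k)+y(g,hk)-y(gh,k)-y(g,h)$; on $\mathrm U(1)\oplus\mathrm U(1)$-valued cochains (multiplicatively), $d^2_ay(g,h,k)=\frac{y^{a(g)}(h,k)\,y(g,hk)}{y(gh,k)\,y(g,h)}$, $d^3_az(g,h,k,f)=\frac{z^{a(g)}(h,k,f)\,z(g,hk,f)\,z(g,h,k)}{z(gh,k,f)\,z(g,h,kf)}$. For $x,y\in\mathbb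 Z_2\oplus\mathbb Z_2$, $x\cdot y:=(x_+y_+,x_-y_-)$ and $(-1)^x:=((-1)^{x_+},(-1)^{x_-})$. $\widetilde{\mathcal{PD}}(G)$ is the set of pentads $(c,\kappa_R,\kappa_L,b,a)$ with $c\in C^3(G,\mathrm U(1)\oplus\mathrm U(1))$, $\kappa_R,\kappa_L\in C^2(G,\mathbb Z_2\oplus\mathbb Z_2)$, $b\in C^1(G,\mathbb Z_2\oplus\mathbb Z_2)$, $a\in H^1(G,\mathbb Z_2)$ with $d^1_ab=\kappa_L+\kappa_R$, $d^2_a\kappa_R=0$, $d^2_a\kappa_L=0$, $d^3_ac(g,h,k,f)=(-1)^{\kappa_L(g,h)\cdot\kappa_R^{a(gh)}(k,f)}$. The relation $\sim$: $(c^{(1)},\kappa_R^{(1)},\kappa_L^{(1)},b^{(1)},a^{(1)})\sim(c^{(2)},\kappa_R^{(2)},\kappa_L^{(2)},b^{(2)},a^{(2)})$ iff $a^{(1)}=a^{(2)}=:a$ and there exist $m\in C^1(G,\mathbb Z_2\oplus\mathbb Z_2)$, $\sigma\in C^2(G,\mathrm U(1)\oplus\mathrm U(1))$ with $\kappa_R^{(2)}=d^1_am+\kappa_R^{(1)}$, $\kappa_L^{(2)}=d^1_ab^{(2)}-d^1_ab^{(1)}-d^1_am+\kappa_L^{(1)}$, and $c^{(2)}(g,h,k)=(-1)^{\kappa_L^{(1)}(g,h)\cdot m^{a(gh)}(k)}(-1)^{(b^{(2)}(g)-b^{(1)}(g)-m(g))\cdot(\kappa_R^{(2)})^{a(g)}(h,k)}d^2_a\sigma(g,h,k)c^{(1)}(g,h,k)$.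 *)

theory Defs
  imports "HOL-Algebra.Group" "HOL-Library.Z2" Complex_Main
begin

text \<open>Z2 is the field type bit; Z2 (+) Z2 is bit \<times> bit, U(1) (+) U(1) is complex \<times> complex
  restricted to unit-modulus components. Cochains are functions on the (type of the) group
  elements; all conditions are imposed only on arguments from the carrier.\<close>

type_synonym z2z2 = "bit \<times> bit"
type_synonym u1u1 = "complex \<times> complex"

definition act :: "bit \<Rightarrow> 'b \<times> 'b \<Rightarrow> 'b \<times> 'b" where
  "act a x = (if a = 1 then (snd x, fst x) else x)"

definition zadd :: "z2z2 \<Rightarrow> z2z2 \<Rightarrow> z2z2" where
  "zadd x y = (fst x + fst y, snd x + snd y)"

definition zsub :: "z2z2 \<Rightarrow> z2z2 \<Rightarrow> z2z2" where
  "zsub x y = (fst x - fst y, snd x - snd y)"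

definition zzero :: z2z2 where "zzero = (0, 0)"

definition zdot :: "z2z2 \<Rightarrow> z2z2 \<Rightarrow> z2z2" where
  "zdot x y = (fst x * fst y, snd x * snd y)"

definition bsign :: "bit \<Rightarrow> complex" where
  "bsign t = (if t = 1 then -1 else 1)"

definition zsign :: "z2z2 \<Rightarrow> u1u1" where
  "zsign x = (bsign (fst x), bsign (snd x))"

definition umul :: "u1u1 \<Rightarrow> u1u1 \<Rightarrow> u1u1" where
  "umul x y = (fst x * fst y, snd x * snd y)"

definition udiv :: "u1u1 \<Rightarrow> u1u1 \<Rightarrow> u1u1" where
  "udiv x y = (fst x / fst y, snd x / snd y)"

definition is_U1U1 :: "u1u1 \<Rightarrow> bool" where
  "is_U1U1 x \<longleftrightarrow> norm (fst x) = 1 \<and> norm (snd x) = 1"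

definition H1 :: "('g, 'm) monoid_scheme \<Rightarrow> ('g \<Rightarrow> bit) \<Rightarrow> bool" where
  "H1 G a \<longleftrightarrow> (\<forall>g\<in>carrier G. \<forall>h\<in>carrier G. a (g \<otimes>\<^bsub>G\<^esub> h) = a g + a h)"

definition d1a :: "('g, 'm) monoid_scheme \<Rightarrow> ('g \<Rightarrow> bit) \<Rightarrow> ('g \<Rightarrow> z2z2) \<Rightarrow> 'g \<Rightarrow> 'g \<Rightarrow> z2z2" where
  "d1a G a x g h = zsub (zadd (act (a g) (x h)) (x g)) (x (g \<otimes>\<^bsub>G\<^esub> h))"

definition d2a :: "('g, 'm) monoid_scheme \<Rightarrow> ('g \<Rightarrow> bit) \<Rightarrow> ('g \<Rightarrow> 'g \<Rightarrow> z2z2)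
    \<Rightarrow> 'g \<Rightarrow> 'g \<Rightarrow> 'g \<Rightarrow> z2z2" where
  "d2a G a y g h k = zsub (zsub (zadd (act (a g) (y h k)) (y g (h \<otimes>\<^bsub>G\<^esub> k)))
       (y (g \<otimes>\<^bsub>G\<^esub> h) k)) (y g h)"

definition d2u :: "('g, 'm) monoid_scheme \<Rightarrow> ('g \<Rightarrow> bit) \<Rightarrow> ('g \<Rightarrow> 'g \<Rightarrow> u1u1)
    \<Rightarrow> 'g \<Rightarrow> 'g \<Rightarrow> 'g \<Rightarrow> u1u1" where
  "d2u G a y g h k = udiv (umul (act (a g) (y h k)) (y g (h \<otimes>\<^bsub>G\<^esub> k)))
       (umul (y (g \<otimes>\<^bsub>G\<^esub> h) k) (y g h))"

definition d3u :: "('g, 'm) monoid_scheme \<Rightarrow> ('g \<Rightarrow> bit) \<Rightarrow> ('g \<Rightarrow> 'g \<Rightarrow> 'g \<Rightarrow> u1u1)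
    \<Rightarrow> 'g \<Rightarrow> 'g \<Rightarrow> 'g \<Rightarrow> 'g \<Rightarrow> u1u1" where
  "d3u G a z g h k f = udiv (umul (umul (act (a g) (z h k f)) (z g (h \<otimes>\<^bsub>G\<^esub> k) f)) (z g h k))
       (umul (z (g \<otimes>\<^bsub>G\<^esub> h) k f) (z g h (k \<otimes>\<^bsub>G\<^esub> f)))"

definition PD :: "('g, 'm) monoid_scheme \<Rightarrow> ('g \<Rightarrow> 'g \<Rightarrow> 'g \<Rightarrow> u1u1) \<Rightarrow> ('g \<Rightarrow> 'g \<Rightarrow> z2z2)
    \<Rightarrow> ('g \<Rightarrow> 'g \<Rightarrow> z2z2) \<Rightarrow> ('g \<Rightarrow> z2z2) \<Rightarrow> ('g \<Rightarrow> bit) \<Rightarrow> bool" where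
  "PD G c kR kL b a \<longleftrightarrow>
     (\<forall>g\<in>carrier G. \<forall>h\<in>carrier G. \<forall>k\<in>carrier G. is_U1U1 (c g h k)) \<and>
     H1 G a \<and>
     (\<forall>g\<in>carrier G. \<forall>h\<in>carrier G. d1a G a b g h = zadd (kL g h) (kR g h)) \<and>
     (\<forall>g\<in>carrier G. \<forall>h\<in>carrier G. \<forall>k\<in>carrier G. d2a G a kR g h k = zzero) \<and>
     (\<forall>g\<in>carrier G. \<forall>h\<in>carrier G. \<forall>k\<in>carrier G. d2a G a kL g h k = zzero) \<and>
     (\<forall>g\<in>carrier G. \<forall>h\<in>carrier G. \<forall>k\<in>carrier G. \<forall>f\<in>carrier G.
        d3u G a c g h k f = zsign (zdot (kL g h) (act (a (g \<otimes>\<^bsub>G\<^esub> h)) (kR k f))))"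

definition PD_rel :: "('g, 'm) monoid_scheme
    \<Rightarrow> ('g \<Rightarrow> 'g \<Rightarrow> 'g \<Rightarrow> u1u1) \<Rightarrow> ('g \<Rightarrow> 'g \<Rightarrow> z2z2) \<Rightarrow> ('g \<Rightarrow> 'g \<Rightarrow> z2z2) \<Rightarrow> ('g \<Rightarrow> z2z2) \<Rightarrow> ('g \<Rightarrow> bit)
    \<Rightarrow> ('g \<Rightarrow> 'g \<Rightarrow> 'g \<Rightarrow> u1u1) \<Rightarrow> ('g \<Rightarrow> 'g \<Rightarrow> z2z2) \<Rightarrow> ('g \<Rightarrow> 'g \<Rightarrow> z2z2) \<Rightarrow> ('g \<Rightarrow> z2z2) \<Rightarrow> ('g \<Rightarrow> bit)
    \<Rightarrow> bool" where
  "PD_rel G c1 kR1 kL1 b1 a1 c2 kR2 kL2 b2 a2 \<longleftrightarrow>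
     (\<forall>g\<in>carrier G. a1 g = a2 g) \<and>
     (\<exists>(m :: 'g \<Rightarrow> z2z2) (\<sigma> :: 'g \<Rightarrow> 'g \<Rightarrow> u1u1).
        (\<forall>g\<in>carrier G. \<forall>h\<in>carrier G. is_U1U1 (\<sigma> g h)) \<and>
        (\<forall>g\<in>carrier G. \<forall>h\<in>carrier G. kR2 g h = zadd (d1a G a1 m g h) (kR1 g h)) \<and>
        (\<forall>g\<in>carrier G. \<forall>h\<in>carrier G.
           kL2 g h = zadd (zsub (zsub (d1a G a1 b2 g h) (d1a G a1 b1 g h)) (d1a G a1 m g h)) (kL1 g h)) \<and>
        (\<forall>g\<in>carrier G. \<forall>h\<in>carrier G. \<forall>k\<in>carrier G.
           c2 g h k = umul (umul (umul
              (zsign (zdot (kL1 g h) (act (a1 (g \<otimes>\<^bsub>G\<^esub> h)) (m k))))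
              (zsign (zdot (zsub (zsub (b2 g) (b1 g)) (m g)) (act (a1 g) (kR2 h k)))))
              (d2u G a1 \<sigma> g h k)) (c1 g h k)))"

end

theory Submission imports Defs begin
declare add_bit_eq_xor[simp del] mult_bit_eq_and[simp del]
lemma bit_self_add[simp]: "(x::bit) + x = 0" by (cases x) simp_all
lemma bit_self_add2[simp]: "(x::bit) + (x + y) = y" by (cases x) simp_all
lemma bit_solve: "(x::bit) + y = z \<longleftrightarrow> x = z + y" by (cases y) (auto simp: add.commute) 

lemma core:
  fixes ag ah :: bit and bg bh bgh kLgh kRgh kRkf kRh_kf kRhk_f kRhk :: "bit \<times> bit"
  assumes d1: "zsub (zadd (act ag bh) bg) bgh = zadd kLgh kRgh"
    and coc: "zsub (zsub (zadd (act ah kRkf) kRh_kf) kRhk_f) kRhk = zzero"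
  shows "zadd (zadd (zadd (zadd (zadd (act ag (zdot bh (act ah kRkf))) (zdot bg (act ag kRhk_f)))
            (zdot bg (act ag kRhk))) (zdot bgh (act (ag+ah) kRkf))) (zdot bg (act ag kRh_kf)))
            (zdot kLgh (act (ag+ah) kRkf)) = zdot kRgh (act (ag+ah) kRkf)"
proof -
  have e1: "bgh = zadd (zadd (zadd (act ag bh) bg) kLgh) kRgh" using d1
    by (simp add: zsub_def zadd_def act_def prod_eq_iff bit_solve add_ac)
  have e2: "kRhk_f = zadd (zadd (act ah kRkf) kRh_kf) kRhk" using coc
    by (simp add: zsub_def zadd_def act_def zzero_def prod_eq_iff bit_solve add_ac)
  show ?thesis unfolding e1 e2
    by (cases ag; cases ah)
      (simp_all add: zadd_def zdot_def act_def ring_distribs add_ac prod_eq_iff)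
qed

lemma bsign_add: "bsign (x + y) = bsign x * bsign y"
  by (cases x; cases y) (simp_all add: bsign_def)
lemma bsign_sq: "bsign x * bsign x = 1"
  by (cases x) (simp_all add: bsign_def)
lemma div_bsign: "z / bsign x = z * bsign x"
  by (cases x) (simp_all add: bsign_def)
lemma div_bsign2: "z / (bsign x * bsign y) = z * bsign x * bsign y"
  by (cases x; cases y) (simp_all add: bsign_def)
lemma norm_bsign: "norm (bsign x) = 1"
  by (cases x) (simp_all add: bsign_def)

lemma zsign_add: "zsign (zadd x y) = umul (zsign x) (zsign y)"
  by (simp add: zsign_def zadd_def umul_def bsign_add)

lemma act_umul: "act a (umul x y) = umul (act a x) (act a y)"
  by (simp add: act_def umul_def)
lemma act_zsign: "act a (zsign x) = zsign (act a x)"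
  by (simp add: act_def zsign_def)

lemma d3u_umul:
  "d3u G a (\<lambda>g h k. umul (x g h k) (y g h k)) g h k f = umul (d3u G a x g h k f) (d3u G a y g h k f)"
  unfolding d3u_def act_umul by (simp add: umul_def udiv_def times_divide_times_eq mult_ac)

lemma d3u_zsign:
  "d3u G a (\<lambda>g h k. zsign (t g h k)) g h k f =
   zsign (zadd (zadd (zadd (zadd (act (a g) (t h k f)) (t g (h \<otimes>\<^bsub>G\<^esub> k) f)) (t g h k))
     (t (g \<otimes>\<^bsub>G\<^esub> h) k f)) (t g h (k \<otimes>\<^bsub>G\<^esub> f)))"
  unfolding d3u_def act_zsign
  by (simp add: zsign_def zadd_def umul_def udiv_def bsign_add div_bsign2)

theorem lemma2p4:
  fixes G :: "('g, 'm) monoid_scheme"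
    and c :: "'g \<Rightarrow> 'g \<Rightarrow> 'g \<Rightarrow> complex \<times> complex"
    and kR kL :: "'g \<Rightarrow> 'g \<Rightarrow> bit \<times> bit"
    and b :: "'g \<Rightarrow> bit \<times> bit"
    and a :: "'g \<Rightarrow> bit"
  assumes "group G" and "finite (carrier G)"
    and "PD G c kR kL b a"
  shows "PD G (\<lambda>g h k. umul (zsign (zdot (b g) (act (a g) (kR h k)))) (c g h k)) kR kR (\<lambda>_. zzero) a
       \<and> PD_rel G c kR kL b a
           (\<lambda>g h k. umul (zsign (zdot (b g) (act (a g) (kR h k)))) (c g h k)) kR kR (\<lambda>_. zzero) a"
proof -
  interpret group G by (rule assms(1))
  note P = assms(3)[unfolded PD_def]
  have U: "\<And>g h k. g \<in> carrier G \<Longrightarrow> h \<in> carrier G \<Longrightarrow> k \<in> carrier G \<Longrightarrow> is_U1U1 (c g h k)"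
    using P by blast
  have Ha: "H1 G a" using P by blast
  have aM: "\<And>g h. g \<in> carrier G \<Longrightarrow> h \<in> carrier G \<Longrightarrow> a (g \<otimes>\<^bsub>G\<^esub> h) = a g + a h"
    using Ha unfolding H1_def by blast
  have D1: "\<And>g h. g \<in> carrier G \<Longrightarrow> h \<in> carrier G \<Longrightarrow> d1a G a b g h = zadd (kL g h) (kR g h)"
    using P by blast
  have CR: "\<And>g h k. g \<in> carrier G \<Longrightarrow> h \<in> carrier G \<Longrightarrow> k \<in> carrier G \<Longrightarrow> d2a G a kR g h k = zzero"
    using P by blast
  have D3: "\<And>g h k f. g \<in> carrier G \<Longrightarrow> h \<in> carrier G \<Longrightarrow> k \<in> carrier G \<Longrightarrow> f \<in> carrier G \<Longrightarrow>
        d3u G a c g h k f = zsign (zdot (kL g h) (act (a (g \<otimes>\<^bsub>G\<^esub> h)) (kR k f)))"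
    using P by blast
  define s where "s = (\<lambda>g h k. zdot (b g) (act (a g) (kR h k)))"
  have part1: "PD G (\<lambda>g h k. umul (zsign (zdot (b g) (act (a g) (kR h k)))) (c g h k)) kR kR (\<lambda>_. zzero) a"
    unfolding PD_def
  proof (intro conjI ballI)
    fix g h k assume "g \<in> carrier G" "h \<in> carrier G" "k \<in> carrier G"
    then show "is_U1U1 (umul (zsign (zdot (b g) (act (a g) (kR h k)))) (c g h k))"
      using U by (simp add: is_U1U1_def umul_def zsign_def norm_mult norm_bsign)
  next
    show "H1 G a" by (rule Ha)
  next
    fix g h show "d1a G a (\<lambda>_. zzero) g h = zadd (kR g h) (kR g h)"
      by (simp add: d1a_def zsub_def zadd_def zzero_def act_def)
  next
    fix g h k assume "g \<in> carrier G" "h \<in> carrier G" "k \<in> carrier G"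
    then show "d2a G a kR g h k = zzero" by (rule CR)
  next
    fix g h k assume "g \<in> carrier G" "h \<in> carrier G" "k \<in> carrier G"
    then show "d2a G a kR g h k = zzero" by (rule CR)
  next
    fix g h k f assume g: "g \<in> carrier G" and h: "h \<in> carrier G" and k: "k \<in> carrier G" and f: "f \<in> carrier G"
    have core': "zadd (zadd (zadd (zadd (zadd (act (a g) (zdot (b h) (act (a h) (kR k f)))) (zdot (b g) (act (a g) (kR (h \<otimes>\<^bsub>G\<^esub> k) f))))
            (zdot (b g) (act (a g) (kR h k)))) (zdot (b (g \<otimes>\<^bsub>G\<^esub> h)) (act (a g + a h) (kR k f)))) (zdot (b g) (act (a g) (kR h (k \<otimes>\<^bsub>G\<^esub> f)))))
            (zdot (kL g h) (act (a g + a h) (kR k f))) = zdot (kR g h) (act (a g + a h) (kR k f))"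
      apply (rule core)
      using D1[OF g h] apply (simp add: d1a_def)
      using CR[OF h k f] apply (simp add: d2a_def)
      done
    have "d3u G a (\<lambda>g h k. umul (zsign (s g h k)) (c g h k)) g h k f
        = umul (d3u G a (\<lambda>g h k. zsign (s g h k)) g h k f) (d3u G a c g h k f)"
      by (rule d3u_umul)
    also have "\<dots> = zsign (zdot (kR g h) (act (a (g \<otimes>\<^bsub>G\<^esub> h)) (kR k f)))"
      unfolding d3u_zsign D3[OF g h k f] zsign_add[symmetric] s_def aM[OF g h] core' ..
    finally show "d3u G a (\<lambda>g h k. umul (zsign (zdot (b g) (act (a g) (kR h k)))) (c g h k)) g h k f =
         zsign (zdot (kR g h) (act (a (g \<otimes>\<^bsub>G\<^esub> h)) (kR k f)))" unfolding s_def .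
  qed
  have part2: "PD_rel G c kR kL b a
           (\<lambda>g h k. umul (zsign (zdot (b g) (act (a g) (kR h k)))) (c g h k)) kR kR (\<lambda>_. zzero) a"
    unfolding PD_rel_def
  proof (intro conjI ballI exI[of _ "\<lambda>_. zzero"] exI[of _ "\<lambda>_ _. (1,1)"])
    fix g assume "g \<in> carrier G" show "a g = a g" ..
  next
    fix g h show "is_U1U1 (1, 1)" by (simp add: is_U1U1_def)
  next
    fix g h show "kR g h = zadd (d1a G a (\<lambda>_. zzero) g h) (kR g h)"
      by (simp add: d1a_def zsub_def zadd_def zzero_def act_def)
  next
    fix g h assume g: "g \<in> carrier G" and h: "h \<in> carrier G"
    show "kR g h = zadd (zsub (zsub (d1a G a (\<lambda>_. zzero) g h) (d1a G a b g h)) (d1a G a (\<lambda>_. zzero) g h)) (kL g h)"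
      unfolding D1[OF g h]
      by (simp add: d1a_def zsub_def zadd_def zzero_def act_def prod_eq_iff add_ac)
  next
    fix g h k
    show "umul (zsign (zdot (b g) (act (a g) (kR h k)))) (c g h k) =
          umul (umul (umul (zsign (zdot (kL g h) (act (a (g \<otimes>\<^bsub>G\<^esub> h)) zzero)))
             (zsign (zdot (zsub (zsub zzero (b g)) zzero) (act (a g) (kR h k)))))
             (d2u G a (\<lambda>_ _. (1, 1)) g h k)) (c g h k)"
      by (simp add: zsign_def zdot_def zsub_def zzero_def act_def d2u_def umul_def udiv_def bsign_def)
  qed
  show ?thesis using part1 part2 by blast
qed
end
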